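(* Let $(R,\mathfrak m,k)$ be a one-dimensional analytically irreducible local domain with canonical map $k\to\overline R/\mathfrak n$ an isomorphism, with $v,a_i,n,I_i,\mathcal T(R),\mathcal I(R)$ as in the context. Let $n\ge 4$ and assume there exists $1\le i\le n-3$ such that $I_iI_{i+2}\ne qI_{i+2}$ for some (equivalently, any) $q\in R$ with $v(q)=a_i$. Then: (1) $\mathcal I(R)\subsetneq\mathcal T(R)$; (2) if $k$ is infinite, then $\mathcal T(R)$ is an infinite set.
   Context: $\overline R$ is the integral closure of $R$ in $Q(R)$, assumed finitely generated over $R$ and local with maximal ideal $\mathfrak n$; $v$ is the normalized valuation of $\overline R$; $v(R)=\{a_0=0<a_1<\cdots\}$; $n$ is the smallest integer with $a_{n+j}=a_n+j$ for all $j\ge 0$; $I_j=\{r\in R\mid v(r)\ge a_j\}$ for $0\le j\le n$; $\mathcal I(R)=\{I_0,\dots,I_n\}$. $\mathcal T(R)$ is the set of nonzero trace ideals of $R$ (ideals of the form $\sum_{f\in\mathrm{Hom}_R(M,R)}\mathrm{Im}f$). *)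

theory Defs
  imports "HOL-Algebra.Module" "HOL-Computational_Algebra.Polynomial" "HOL-Library.Infinite_Set"
begin

text \<open>Throughout, the ring R is a subring (given as a carrier set) of an ambient field
  of type 'a, which will be its field of fractions Q(R).\<close>

definition subring_of :: "'a::field set \<Rightarrow> bool" where
  "subring_of R \<longleftrightarrow> 0 \<in> R \<and> 1 \<in> R \<and> (\<forall>x\<in>R. \<forall>y\<in>R. x + y \<in> R \<and> x - y \<in> R \<and> x * y \<in> R)"

definition is_ideal :: "'a::field set \<Rightarrow> 'a set \<Rightarrow> bool" where
  "is_ideal R I \<longleftrightarrow> I \<subseteq> R \<and> 0 \<in> I \<and> (\<forall>x\<in>I. \<forall>y\<in>I. x + y \<in> I) \<and> (\<forall>r\<in>R. \<forall>x\<in>I. r * x \<in> I)"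

definition ideal_gen :: "'a::field set \<Rightarrow> 'a set \<Rightarrow> 'a set" where
  "ideal_gen R S = \<Inter>{I. is_ideal R I \<and> S \<subseteq> I}"

definition ideal_prod :: "'a::field set \<Rightarrow> 'a set \<Rightarrow> 'a set \<Rightarrow> 'a set" where
  "ideal_prod R I J = ideal_gen R {a * b |a b. a \<in> I \<and> b \<in> J}"

primrec ideal_pow :: "'a::field set \<Rightarrow> 'a set \<Rightarrow> nat \<Rightarrow> 'a set" where
  "ideal_pow R I 0 = R"
| "ideal_pow R I (Suc k) = ideal_prod R I (ideal_pow R I k)"

definition noetherian :: "'a::field set \<Rightarrow> bool" where
  "noetherian R \<longleftrightarrow> (\<forall>I. is_ideal R I \<longrightarrow> (\<exists>F. finite F \<and> F \<subseteq> I \<and> I = ideal_gen R F))"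

definition maximal_ideal :: "'a::field set \<Rightarrow> 'a set \<Rightarrow> bool" where
  "maximal_ideal R m \<longleftrightarrow> is_ideal R m \<and> m \<noteq> R \<and>
     (\<forall>J. is_ideal R J \<and> m \<subseteq> J \<longrightarrow> J = m \<or> J = R)"

definition local_ring :: "'a::field set \<Rightarrow> 'a set \<Rightarrow> bool" where
  "local_ring R m \<longleftrightarrow> maximal_ideal R m \<and> (\<forall>J. maximal_ideal R J \<longrightarrow> J = m)"

definition prime_ideal :: "'a::field set \<Rightarrow> 'a set \<Rightarrow> bool" where
  "prime_ideal R P \<longleftrightarrow> is_ideal R P \<and> P \<noteq> R \<and> (\<forall>x\<in>R. \<forall>y\<in>R. x * y \<in> P \<longrightarrow> x \<in> P \<or> y \<in> P)"

definition prime_chain :: "'a::field set \<Rightarrow> nat \<Rightarrow> (nat \<Rightarrow> 'a set) \<Rightarrow> bool" where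
  "prime_chain R d P \<longleftrightarrow> (\<forall>i\<le>d. prime_ideal R (P i)) \<and> (\<forall>i<d. P i \<subset> P (Suc i))"

definition krull_dim_eq :: "'a::field set \<Rightarrow> nat \<Rightarrow> bool" where
  "krull_dim_eq R d \<longleftrightarrow> (\<exists>P. prime_chain R d P) \<and> \<not> (\<exists>P. prime_chain R (Suc d) P)"

definition is_fraction_field_of :: "'a::field set \<Rightarrow> bool" where
  "is_fraction_field_of R \<longleftrightarrow> (\<forall>x. \<exists>a\<in>R. \<exists>b\<in>R. b \<noteq> 0 \<and> x = a / b)"

definition integral_over :: "'a::field set \<Rightarrow> 'a \<Rightarrow> bool" where
  "integral_over R x \<longleftrightarrow> (\<exists>p. lead_coeff p = 1 \<and> (\<forall>i. coeff p i \<in> R) \<and> poly p x = 0)"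

definition integral_closure :: "'a::field set \<Rightarrow> 'a set" where
  "integral_closure R = {x. integral_over R x}"

definition fin_gen_module :: "'a::field set \<Rightarrow> 'a set \<Rightarrow> bool" where
  "fin_gen_module R B \<longleftrightarrow> (\<exists>F. finite F \<and> F \<subseteq> B \<and> B = {(\<Sum>f\<in>F. c f * f) |c. \<forall>f\<in>F. c f \<in> R})"

text \<open>The m-adic completion of R is a domain (R analytically irreducible):
  if the product of two m-adic Cauchy sequences is m-adically null, one of them is null.\<close>
definition adic_cauchy :: "'a::field set \<Rightarrow> 'a set \<Rightarrow> (nat \<Rightarrow> 'a) \<Rightarrow> bool" where
  "adic_cauchy R m x \<longleftrightarrow> (\<forall>i. x i \<in> R) \<and>
     (\<forall>k. \<exists>N. \<forall>p\<ge>N. \<forall>q\<ge>N. x p - x q \<in> ideal_pow R m k)"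

definition adic_null :: "'a::field set \<Rightarrow> 'a set \<Rightarrow> (nat \<Rightarrow> 'a) \<Rightarrow> bool" where
  "adic_null R m x \<longleftrightarrow> (\<forall>k. \<exists>N. \<forall>p\<ge>N. x p \<in> ideal_pow R m k)"

definition analytically_irreducible :: "'a::field set \<Rightarrow> 'a set \<Rightarrow> bool" where
  "analytically_irreducible R m \<longleftrightarrow>
     (\<forall>x y. adic_cauchy R m x \<and> adic_cauchy R m y \<and> adic_null R m (\<lambda>i. x i * y i)
        \<longrightarrow> adic_null R m x \<or> adic_null R m y)"

text \<open>The canonical map k = R/m \<rightarrow> Rbar/n, r + m \<mapsto> r + n, is a well-defined
  isomorphism (well-defined and injective: m = n \<inter> R; surjective: Rbar = R + n).\<close>
definition residue_map_iso :: "'a::field set \<Rightarrow> 'a set \<Rightarrow> 'a set \<Rightarrow> 'a set \<Rightarrow> bool" where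
  "residue_map_iso R m B n \<longleftrightarrow> (\<forall>r\<in>R. r \<in> m \<longleftrightarrow> r \<in> n) \<and> (\<forall>x\<in>B. \<exists>r\<in>R. x - r \<in> n)"

definition normalized_valuation :: "'a::field set \<Rightarrow> ('a \<Rightarrow> int) \<Rightarrow> bool" where
  "normalized_valuation B v \<longleftrightarrow>
     (\<forall>x y. x \<noteq> 0 \<and> y \<noteq> 0 \<longrightarrow> v (x * y) = v x + v y) \<and>
     (\<forall>x y. x \<noteq> 0 \<and> y \<noteq> 0 \<and> x + y \<noteq> 0 \<longrightarrow> v (x + y) \<ge> min (v x) (v y)) \<and>
     (\<forall>k. \<exists>x. x \<noteq> 0 \<and> v x = k) \<and>
     (\<forall>x. x \<in> B \<longleftrightarrow> x = 0 \<or> v x \<ge> 0)"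

definition value_set :: "'a::field set \<Rightarrow> ('a \<Rightarrow> int) \<Rightarrow> nat set" where
  "value_set R v = {nat (v r) |r. r \<in> R \<and> r \<noteq> 0}"

definition aseq :: "'a::field set \<Rightarrow> ('a \<Rightarrow> int) \<Rightarrow> nat \<Rightarrow> nat" where
  "aseq R v i = enumerate (value_set R v) i"

definition n_index :: "'a::field set \<Rightarrow> ('a \<Rightarrow> int) \<Rightarrow> nat" where
  "n_index R v = (LEAST n. \<forall>j. aseq R v (n + j) = aseq R v n + j)"

definition Iv :: "'a::field set \<Rightarrow> ('a \<Rightarrow> int) \<Rightarrow> nat \<Rightarrow> 'a set" where
  "Iv R v j = {r \<in> R. r = 0 \<or> v r \<ge> int (aseq R v j)}"

definition I_family :: "'a::field set \<Rightarrow> ('a \<Rightarrow> int) \<Rightarrow> 'a set set" where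
  "I_family R v = {Iv R v j |j. j \<le> n_index R v}"

text \<open>R as a HOL-Algebra ring record, so that R-modules are HOL-Algebra modules.\<close>
definition ring_of :: "'a::field set \<Rightarrow> 'a ring" where
  "ring_of R = \<lparr>carrier = R, monoid.mult = (*), one = 1, zero = 0, add = (+)\<rparr>"

definition Hom_to_R :: "'a::field set \<Rightarrow> ('a, 'm) module \<Rightarrow> ('m \<Rightarrow> 'a) set" where
  "Hom_to_R R M = {f. (\<forall>x\<in>carrier M. f x \<in> R) \<and>
      (\<forall>x\<in>carrier M. \<forall>y\<in>carrier M. f (x \<oplus>\<^bsub>M\<^esub> y) = f x + f y) \<and>
      (\<forall>a\<in>R. \<forall>x\<in>carrier M. f (a \<odot>\<^bsub>M\<^esub> x) = a * f x)}"

text \<open>Trace ideal of M: the sum (= ideal generated by the union) of all images.\<close>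
definition trace_of :: "'a::field set \<Rightarrow> ('a, 'm) module \<Rightarrow> 'a set" where
  "trace_of R M = ideal_gen R (\<Union>f\<in>Hom_to_R R M. f ` carrier M)"

text \<open>Nonzero trace ideals. The module M ranges over R-modules whose elements live in
  the fixed type 'a set \<Rightarrow> 'a (large enough).\<close>
definition trace_ideals :: "'a::field set \<Rightarrow> 'a set set" where
  "trace_ideals R = {I. I \<noteq> {0} \<and>
      (\<exists>M :: ('a, 'a set \<Rightarrow> 'a) module. Module.module (ring_of R) M \<and> I = trace_of R M)}"

definition residue_field :: "'a::field set \<Rightarrow> 'a set \<Rightarrow> 'a set set" where
  "residue_field R m = (\<lambda>r. (\<lambda>x. r + x) ` m) ` R"

end

theory Submission
  imports Defs
begin


lemma subring_ofD:
  assumes "subring_of R"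
  shows "0 \<in> R" "1 \<in> R" "\<And>x y. x \<in> R \<Longrightarrow> y \<in> R \<Longrightarrow> x + y \<in> R"
    "\<And>x y. x \<in> R \<Longrightarrow> y \<in> R \<Longrightarrow> x - y \<in> R"
    "\<And>x y. x \<in> R \<Longrightarrow> y \<in> R \<Longrightarrow> x * y \<in> R"
    "\<And>x. x \<in> R \<Longrightarrow> - x \<in> R"
proof -
  show "0 \<in> R" "1 \<in> R" "\<And>x y. x \<in> R \<Longrightarrow> y \<in> R \<Longrightarrow> x + y \<in> R"
    "\<And>x y. x \<in> R \<Longrightarrow> y \<in> R \<Longrightarrow> x - y \<in> R"
    "\<And>x y. x \<in> R \<Longrightarrow> y \<in> R \<Longrightarrow> x * y \<in> R"
    using assms unfolding subring_of_def by auto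
  fix x assume "x \<in> R"
  then have "0 - x \<in> R" using assms unfolding subring_of_def by auto
  then show "- x \<in> R" by simp
qed

lemma cring_ring_of:
  assumes "subring_of R"
  shows "cring (ring_of R)"
proof -
  note S = subring_ofD[OF assms]
  show ?thesis
  proof (rule cringI)
    show "abelian_group (ring_of R)"
    proof (rule abelian_groupI)
      fix x assume "x \<in> carrier (ring_of R)"
      then show "\<exists>y\<in>carrier (ring_of R). y \<oplus>\<^bsub>ring_of R\<^esub> x = \<zero>\<^bsub>ring_of R\<^esub>"
        by (intro bexI[of _ "- x"]) (simp_all add: ring_of_def S)
    qed (simp_all add: ring_of_def S add.assoc add.commute)
    show "comm_monoid (ring_of R)"
      by (rule comm_monoidI) (simp_all add: ring_of_def S mult.assoc mult.commute)
  qed (simp add: ring_of_def distrib_right)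
qed

definition embM :: "'a::field set \<Rightarrow> ('a, 'a set \<Rightarrow> 'a) module" where
  "embM K = \<lparr>carrier = (\<lambda>x. \<lambda>_::'a set. x) ` K, monoid.mult = (\<lambda>a b. a), one = (\<lambda>_. 0),
     zero = (\<lambda>_. 0), add = (\<lambda>a b. \<lambda>s. a s + b s), module.smult = (\<lambda>r a. \<lambda>s. r * a s)\<rparr>"

lemma is_idealD:
  assumes "is_ideal R I"
  shows "I \<subseteq> R" "0 \<in> I" "\<And>x y. x \<in> I \<Longrightarrow> y \<in> I \<Longrightarrow> x + y \<in> I"
    "\<And>r x. r \<in> R \<Longrightarrow> x \<in> I \<Longrightarrow> r * x \<in> I"
  using assms unfolding is_ideal_def by auto

lemma module_embM:
  assumes "subring_of R" "is_ideal R K"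
  shows "Module.module (ring_of R) (embM K)"
proof -
  note S = subring_ofD[OF assms(1)]
  note I = is_idealD[OF assms(2)]
  have neg: "- x \<in> K" if "x \<in> K" for x
  proof -
    have "(-1) * x \<in> K" using I(4)[OF S(6)[OF S(2)] that] .
    then show ?thesis by simp
  qed
  show ?thesis
  proof (rule moduleI)
    show "cring (ring_of R)" by (rule cring_ring_of[OF assms(1)])
    show "abelian_group (embM K)"
    proof (rule abelian_groupI)
      fix x assume "x \<in> carrier (embM K)"
      then obtain a where a: "a \<in> K" "x = (\<lambda>_. a)" by (auto simp: embM_def)
      show "\<exists>y\<in>carrier (embM K). y \<oplus>\<^bsub>embM K\<^esub> x = \<zero>\<^bsub>embM K\<^esub>"
        by (rule bexI[of _ "\<lambda>_. - a"]) (auto simp: embM_def a neg)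
    next
      show "\<zero>\<^bsub>embM K\<^esub> \<in> carrier (embM K)" using I(2) by (simp add: embM_def image_iff) (metis)
    qed (auto simp: embM_def I add.assoc add.commute)
  qed (auto simp: embM_def ring_of_def I distrib_left distrib_right)
qed

lemma ideal_gen_ideal:
  assumes "is_ideal R K" shows "ideal_gen R K = K"
  using assms unfolding ideal_gen_def by auto

lemma embM_simps:
  "carrier (embM K) = (\<lambda>x. \<lambda>_::'a set. x) ` K"
  "a \<oplus>\<^bsub>embM K\<^esub> b = (\<lambda>s. a s + b s)"
  "r \<odot>\<^bsub>embM K\<^esub> b = (\<lambda>s. r * b s)"
  for K :: "'a::field set"
  by (simp_all add: embM_def)

lemma Hom_to_RD:
  assumes "f \<in> Hom_to_R R (embM K)"
  shows "\<And>y. y \<in> K \<Longrightarrow> f (\<lambda>_. y) \<in> R"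
    "\<And>a y. a \<in> R \<Longrightarrow> y \<in> K \<Longrightarrow> f (\<lambda>_. a * y) = a * f (\<lambda>_. y)"
proof -
  have H: "\<forall>x\<in>carrier (embM K). f x \<in> R"
    "\<forall>a\<in>R. \<forall>x\<in>carrier (embM K). f (a \<odot>\<^bsub>embM K\<^esub> x) = a * f x"
    using assms unfolding Hom_to_R_def by blast+
  show "\<And>y. y \<in> K \<Longrightarrow> f (\<lambda>_. y) \<in> R" using H(1) unfolding embM_simps by blast
  fix a y assume "a \<in> R" "y \<in> K"
  moreover have "(\<lambda>_::'a set. y) \<in> carrier (embM K)" unfolding embM_simps using \<open>y \<in> K\<close> by blast
  ultimately have "f (a \<odot>\<^bsub>embM K\<^esub> (\<lambda>_. y)) = a * f (\<lambda>_. y)" using H(2) by blast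
  then show "f (\<lambda>_. a * y) = a * f (\<lambda>_. y)" unfolding embM_simps by simp
qed

lemma trace_idealI:
  assumes sub: "subring_of R" and K: "is_ideal R K" and nz: "K \<noteq> {0}"
    and Ptr: "\<And>z. (\<forall>y\<in>K. z * y \<in> R) \<Longrightarrow> (\<forall>y\<in>K. z * y \<in> K)"
  shows "K \<in> trace_ideals R"
proof -
  note S = subring_ofD[OF sub]
  note I = is_idealD[OF K]
  obtain y0 where y0: "y0 \<in> K" "y0 \<noteq> 0" using nz I(2) by auto
  have img: "f ` carrier (embM K) \<subseteq> K" if f: "f \<in> Hom_to_R R (embM K)" for f
  proof
    fix g assume "g \<in> f ` carrier (embM K)"
    then obtain y where y: "y \<in> K" "g = f (\<lambda>_. y)" unfolding embM_simps by blast
    define z where "z = f (\<lambda>_. y0) / y0"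
    note lin = Hom_to_RD(2)[OF f]
    have fz: "f (\<lambda>_. w) = z * w" if "w \<in> K" for w
    proof -
      have "y0 * f (\<lambda>_. w) = f (\<lambda>_. y0 * w)" using lin[of y0 w] y0 that I(1) by auto
      also have "\<dots> = f (\<lambda>_. w * y0)" by (simp add: mult.commute)
      also have "\<dots> = w * f (\<lambda>_. y0)" using lin[of w y0] y0 that I(1) by auto
      finally show ?thesis using y0 unfolding z_def by (simp add: field_simps)
    qed
    have "\<forall>w\<in>K. z * w \<in> R"
    proof
      fix w assume "w \<in> K"
      then have "f (\<lambda>_. w) \<in> R" using Hom_to_RD(1)[OF f] by blast
      then show "z * w \<in> R" using fz[OF \<open>w \<in> K\<close>] by simp
    qed
    then have "z * y \<in> K" using Ptr y(1) by blast
    then show "g \<in> K" using y fz by simp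
  qed
  define f0 :: "('a set \<Rightarrow> 'a) \<Rightarrow> 'a" where "f0 = (\<lambda>g. g {})"
  have f0: "f0 \<in> Hom_to_R R (embM K)"
    unfolding Hom_to_R_def f0_def embM_simps using I(1) by auto
  have "f0 ` carrier (embM K) = K" unfolding embM_simps f0_def by (simp add: image_image)
  then have U: "(\<Union>f\<in>Hom_to_R R (embM K). f ` carrier (embM K)) = K"
    using img f0 by blast
  have "trace_of R (embM K) = K" unfolding trace_of_def U by (rule ideal_gen_ideal[OF K])
  then have "\<exists>M :: ('a, 'a set \<Rightarrow> 'a) module. Module.module (ring_of R) M \<and> K = trace_of R M"
    using module_embM[OF sub K] by metis
  then show ?thesis unfolding trace_ideals_def using nz by blast
qed


lemma finite_image_factor:
  assumes "finite (f ` A)" "\<And>x y. x \<in> A \<Longrightarrow> y \<in> A \<Longrightarrow> f x = f y \<Longrightarrow> g x = g y"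
  shows "finite (g ` A)"
proof -
  define h where "h = (\<lambda>b. g (SOME x. x \<in> A \<and> f x = b))"
  have "g ` A \<subseteq> h ` (f ` A)"
  proof
    fix t assume "t \<in> g ` A"
    then obtain x where x: "x \<in> A" "t = g x" by blast
    have ex: "\<exists>x'. x' \<in> A \<and> f x' = f x" using x by blast
    have "(SOME x'. x' \<in> A \<and> f x' = f x) \<in> A \<and> f (SOME x'. x' \<in> A \<and> f x' = f x) = f x"
      by (rule someI_ex[OF ex])
    then have "h (f x) = g x" unfolding h_def using assms(2) x(1) by blast
    then show "t \<in> h ` (f ` A)" using x by force
  qed
  then show ?thesis using assms(1) finite_subset by blast
qed

locale vsetting =
  fixes R :: "'a::field set" and m nn :: "'a set" and v :: "'a \<Rightarrow> int"
  assumes subR: "subring_of R"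
    and QR: "is_fraction_field_of R"
    and fg: "fin_gen_module R (integral_closure R)"
    and locbar: "local_ring (integral_closure R) nn"
    and iso: "residue_map_iso R m (integral_closure R) nn"
    and val: "normalized_valuation (integral_closure R) v"
begin

lemmas S = subring_ofD[OF subR]

lemma v_mult: "x \<noteq> 0 \<Longrightarrow> y \<noteq> 0 \<Longrightarrow> v (x * y) = v x + v y"
  using val unfolding normalized_valuation_def by blast

lemma v_add_ge: "x \<noteq> 0 \<Longrightarrow> y \<noteq> 0 \<Longrightarrow> x + y \<noteq> 0 \<Longrightarrow> min (v x) (v y) \<le> v (x + y)"
  using val unfolding normalized_valuation_def by blast

lemma v_surj: "\<exists>x. x \<noteq> 0 \<and> v x = k"
  using val unfolding normalized_valuation_def by blast

lemma B_iff: "x \<in> integral_closure R \<longleftrightarrow> x = 0 \<or> 0 \<le> v x"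
  using val unfolding normalized_valuation_def by blast

lemma v_one: "v 1 = 0"
  using v_mult[of 1 1] by simp

lemma v_inverse: "x \<noteq> 0 \<Longrightarrow> v (inverse x) = - v x"
  using v_mult[of x "inverse x"] v_one by simp

lemma v_divide: "x \<noteq> 0 \<Longrightarrow> y \<noteq> 0 \<Longrightarrow> v (x / y) = v x - v y"
  by (simp add: divide_inverse v_mult v_inverse)

lemma v_minus_one: "v (-1) = 0"
  using v_mult[of "-1" "-1"] v_one by simp

lemma v_uminus: "v (- x) = v x"
proof (cases "x = 0")
  case False
  have "- x = (-1) * x" by simp
  then show ?thesis using v_mult[of "-1" x] False v_minus_one by simp
qed simp

lemma v_strict:
  assumes "x \<noteq> 0" "y = 0 \<or> v x < v y"
  shows "x + y \<noteq> 0 \<and> v (x + y) = v x"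
proof (cases "y = 0")
  case False
  then have lt: "v x < v y" using assms by auto
  have ne: "x + y \<noteq> 0"
  proof
    assume "x + y = 0"
    then have "y = - x" by (simp add: add_eq_0_iff)
    then show False using lt v_uminus by simp
  qed
  have ge: "min (v x) (v y) \<le> v (x + y)" using v_add_ge[OF assms(1) False ne] .
  have "min (v (x + y)) (v (- y)) \<le> v ((x + y) + (- y))"
    using v_add_ge[of "x + y" "- y"] ne False assms(1) by simp
  then have m1: "min (v (x + y)) (v y) \<le> v x" by (simp add: v_uminus)
  have "v (x + y) \<le> v x"
  proof (rule ccontr)
    assume "\<not> v (x + y) \<le> v x"
    then have "v x < min (v (x + y)) (v y)" using lt by simp
    then show False using m1 by (simp add: min_def split: if_splits)
  qed
  moreover have "v x \<le> v (x + y)" using ge lt by (simp add: min_def split: if_splits)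
  ultimately show ?thesis using ne by simp
qed (use assms in simp)

definition vge :: "'a \<Rightarrow> int \<Rightarrow> bool" where
  "vge x k \<longleftrightarrow> x = 0 \<or> k \<le> v x"

lemma vge_0 [simp]: "vge 0 k" by (simp add: vge_def)

lemma vge_mono: "vge x k \<Longrightarrow> l \<le> k \<Longrightarrow> vge x l"
  by (auto simp: vge_def)

lemma vge_uminus: "vge (- x) k \<longleftrightarrow> vge x k"
  by (simp add: vge_def v_uminus)

lemma vge_add: "vge x k \<Longrightarrow> vge y k \<Longrightarrow> vge (x + y) k"
  unfolding vge_def using v_add_ge[of x y] by fastforce

lemma vge_diff: "vge x k \<Longrightarrow> vge y k \<Longrightarrow> vge (x - y) k"
  using vge_add[of x k "- y"] vge_uminus[of y k] by simp

lemma vge_mult: "vge x k \<Longrightarrow> vge y l \<Longrightarrow> vge (x * y) (k + l)"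
  unfolding vge_def by (cases "x = 0 \<or> y = 0") (auto simp: v_mult)

lemma vge_v: "vge x (v x)" by (simp add: vge_def)

lemma vge_inverse: "vge (inverse x) (- v x)"
  by (cases "x = 0") (simp_all add: vge_def v_inverse)

lemma B_vge: "x \<in> integral_closure R \<longleftrightarrow> vge x 0"
  by (simp add: B_iff vge_def)

lemma R_vge: assumes "r \<in> R" shows "vge r 0"
proof -
  let ?p = "[:- r, 1:]"
  have "lead_coeff ?p = 1" by simp
  moreover have "\<forall>i. coeff ?p i \<in> R"
  proof
    fix i show "coeff ?p i \<in> R"
    proof (cases i)
      case 0 then show ?thesis using assms S by simp
    next
      case (Suc k) then show ?thesis using S by (cases k) simp_all
    qed
  qed
  moreover have "poly ?p r = 0" by simp
  ultimately have "integral_over R r" unfolding integral_over_def by blast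
  then show ?thesis using B_vge unfolding integral_closure_def by auto
qed

lemma R_nonneg: "r \<in> R \<Longrightarrow> r \<noteq> 0 \<Longrightarrow> 0 \<le> v r"
  using R_vge by (auto simp: vge_def)

lemma nn_iff: "x \<in> nn \<longleftrightarrow> vge x 1"
proof -
  define P where "P = {x. vge x 1}"
  let ?B = "integral_closure R"
  have Bd: "x \<in> ?B \<longleftrightarrow> vge x 0" for x by (rule B_vge)
  have PB: "P \<subseteq> ?B"
  proof
    fix x assume "x \<in> P"
    then have "vge x 1" by (simp add: P_def)
    then have "vge x 0" by (rule vge_mono) simp
    then show "x \<in> ?B" by (simp add: Bd)
  qed
  have idP: "is_ideal ?B P"
    unfolding is_ideal_def
  proof (intro conjI ballI)
    show "P \<subseteq> ?B" by (rule PB)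
    show "0 \<in> P" by (simp add: P_def)
    fix x y assume "x \<in> P" "y \<in> P"
    then show "x + y \<in> P" by (simp add: P_def vge_add)
  next
    fix r x assume "r \<in> ?B" "x \<in> P"
    then show "r * x \<in> P" unfolding P_def Bd using vge_mult[of r 0 x 1] by simp
  qed
  have "1 \<notin> P" by (simp add: P_def vge_def v_one)
  moreover have "1 \<in> ?B" by (simp add: Bd vge_def v_one)
  ultimately have PneB: "P \<noteq> ?B" by blast
  have maxP: "maximal_ideal ?B P"
    unfolding maximal_ideal_def
  proof (intro conjI allI impI idP PneB)
    fix J assume J: "is_ideal ?B J \<and> P \<subseteq> J"
    show "J = P \<or> J = ?B"
    proof (cases "J \<subseteq> P")
      case True then show ?thesis using J by blast
    next
      case False
      then obtain x where x: "x \<in> J" "x \<notin> P" by blast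
      have xB: "x \<in> ?B" using J x unfolding is_ideal_def by blast
      then have "x \<noteq> 0" "v x = 0" using x unfolding P_def Bd vge_def by auto
      then have "inverse x \<in> ?B" by (simp add: Bd vge_def v_inverse)
      then have one: "inverse x * x \<in> J" using J x unfolding is_ideal_def by blast
      have "1 \<in> J" using one \<open>x \<noteq> 0\<close> by simp
      have "?B \<subseteq> J"
      proof
        fix b assume "b \<in> ?B"
        then have "b * 1 \<in> J" using J \<open>1 \<in> J\<close> unfolding is_ideal_def by blast
        then show "b \<in> J" by simp
      qed
      then show ?thesis using J unfolding is_ideal_def by blast
    qed
  qed
  then have "P = nn" using locbar unfolding local_ring_def by blast
  then show ?thesis unfolding P_def by blast
qed

lemma residue: assumes "vge x 0" shows "\<exists>r\<in>R. vge (x - r) 1"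
proof -
  have "x \<in> integral_closure R" using assms B_vge by simp
  then obtain r where "r \<in> R" "x - r \<in> nn" using iso unfolding residue_map_iso_def by blast
  then show ?thesis using nn_iff by blast
qed

lemma m_iff: "r \<in> R \<Longrightarrow> r \<in> m \<longleftrightarrow> vge r 1"
  using iso nn_iff unfolding residue_map_iso_def by blast

lemma approx:
  assumes "u \<noteq> 0" "vge x (v u)"
  shows "\<exists>\<alpha>\<in>R. vge (x - \<alpha> * u) (v u + 1)"
proof (cases "x = 0")
  case True then show ?thesis using S(1) by (intro bexI[of _ 0]) simp_all
next
  case False
  have "v u \<le> v x" using assms(2) False by (simp add: vge_def)
  then have "vge (x / u) 0" using assms(1) False by (simp add: vge_def v_divide)
  then obtain r where r: "r \<in> R" "vge (x / u - r) 1" using residue by blast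
  have "x - r * u = u * (x / u - r)" using assms(1) by (simp add: field_simps)
  moreover have "vge (u * (x / u - r)) (v u + 1)" using vge_mult[OF vge_v r(2)] by simp
  ultimately have "vge (x - r * u) (v u + 1)" by simp
  then show ?thesis using r(1) by blast
qed

lemma sum_in_R: "finite A \<Longrightarrow> (\<And>a. a \<in> A \<Longrightarrow> g a \<in> R) \<Longrightarrow> sum g A \<in> R"
  by (induction A rule: finite_induct) (auto simp: S)

lemma prod_in_R: "finite A \<Longrightarrow> (\<And>a. a \<in> A \<Longrightarrow> g a \<in> R) \<Longrightarrow> prod g A \<in> R"
  by (induction A rule: finite_induct) (auto simp: S)

lemma conductor_ex: "\<exists>N. \<forall>x. vge x N \<longrightarrow> x \<in> R"
proof -
  obtain F where F: "finite F" "F \<subseteq> integral_closure R"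
    "integral_closure R = {(\<Sum>f\<in>F. c f * f) |c. \<forall>f\<in>F. c f \<in> R}"
    using fg unfolding fin_gen_module_def by blast
  have ex: "\<forall>x. \<exists>ab. fst ab \<in> R \<and> snd ab \<in> R \<and> snd ab \<noteq> 0 \<and> x = fst ab / snd ab"
  proof
    fix x
    obtain a b where "a \<in> R" "b \<in> R" "b \<noteq> 0" "x = a / b"
      using QR unfolding is_fraction_field_of_def by blast
    then show "\<exists>ab. fst ab \<in> R \<and> snd ab \<in> R \<and> snd ab \<noteq> 0 \<and> x = fst ab / snd ab"
      by (intro exI[of _ "(a, b)"]) simp
  qed
  obtain g where g0: "\<forall>x. fst (g x) \<in> R \<and> snd (g x) \<in> R \<and> snd (g x) \<noteq> 0 \<and> x = fst (g x) / snd (g x)"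
    using choice[OF ex] by blast
  then have ga: "\<And>x. fst (g x) \<in> R" and gb: "\<And>x. snd (g x) \<in> R"
    and gnz: "\<And>x. snd (g x) \<noteq> 0" and geq: "\<And>x. x = fst (g x) / snd (g x)"
    by blast+
  define s where "s = (\<Prod>f\<in>F. snd (g f))"
  have sR: "s \<in> R" unfolding s_def using F(1) gb by (intro prod_in_R) auto
  have s0: "s \<noteq> 0" unfolding s_def using F(1) gnz by simp
  have sf: "s * f \<in> R" if "f \<in> F" for f
  proof -
    have "s = snd (g f) * (\<Prod>f'\<in>F - {f}. snd (g f'))"
      unfolding s_def using F(1) that by (simp add: prod.remove)
    then have "s * f = (\<Prod>f'\<in>F - {f}. snd (g f')) * (snd (g f) * f)" by (simp add: ac_simps)
    also have "snd (g f) * f = fst (g f)"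
    proof -
      have e: "f = fst (g f) / snd (g f)" and nz: "snd (g f) \<noteq> 0" using geq[of f] gnz[of f] by blast+
      have "snd (g f) * f = snd (g f) * (fst (g f) / snd (g f))" using e by simp
      also have "\<dots> = fst (g f)" using nz by simp
      finally show ?thesis .
    qed
    finally show ?thesis using ga gb F(1) by (auto intro!: S(5) prod_in_R)
  qed
  have sB: "s * x \<in> R" if "x \<in> integral_closure R" for x
  proof -
    have "x \<in> {(\<Sum>f\<in>F. c f * f) |c. \<forall>f\<in>F. c f \<in> R}" using that F(3) by simp
    then have "\<exists>c. x = (\<Sum>f\<in>F. c f * f) \<and> (\<forall>f\<in>F. c f \<in> R)" by (simp only: mem_Collect_eq)
    then obtain c where c: "\<forall>f\<in>F. c f \<in> R" "x = (\<Sum>f\<in>F. c f * f)" by blast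
    have "s * x = (\<Sum>f\<in>F. s * (c f * f))" by (simp add: c(2) sum_distrib_left)
    also have "\<dots> = (\<Sum>f\<in>F. c f * (s * f))" by (simp add: mult.left_commute)
    also have "\<dots> \<in> R" using F(1) c(1) sf by (intro sum_in_R) (auto intro: S(5))
    finally show ?thesis .
  qed
  have "\<forall>x. vge x (v s) \<longrightarrow> x \<in> R"
  proof (intro allI impI)
    fix x assume x: "vge x (v s)"
    show "x \<in> R"
    proof (cases "x = 0")
      case True then show ?thesis using S by simp
    next
      case False
      then have "vge (x / s) 0" using x s0 by (simp add: vge_def v_divide)
      then have "s * (x / s) \<in> R" using sB B_vge by blast
      then show ?thesis using s0 by simp
    qed
  qed
  then show ?thesis by blast
qed

end


context vsetting begin

abbreviation V where "V \<equiv> value_set R v"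
abbreviation a where "a \<equiv> aseq R v"
abbreviation n where "n \<equiv> n_index R v"
abbreviation c where "c \<equiv> aseq R v (n_index R v)"
abbreviation I where "I \<equiv> Iv R v"

lemma V_iff: "k \<in> V \<longleftrightarrow> (\<exists>r\<in>R. r \<noteq> 0 \<and> v r = int k)"
proof
  assume "k \<in> V"
  then obtain r where r: "r \<in> R" "r \<noteq> 0" "k = nat (v r)" unfolding value_set_def by blast
  then have "0 \<le> v r" using R_nonneg by blast
  then show "\<exists>r\<in>R. r \<noteq> 0 \<and> v r = int k" using r by auto
next
  assume "\<exists>r\<in>R. r \<noteq> 0 \<and> v r = int k"
  then obtain r where r: "r \<in> R" "r \<noteq> 0" "v r = int k" by blast
  then have "k = nat (v r)" by simp
  then show "k \<in> V" unfolding value_set_def using r by blast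
qed

definition N0 where "N0 = (SOME N. \<forall>x. vge x N \<longrightarrow> x \<in> R)"

lemma N0: "vge x N0 \<Longrightarrow> x \<in> R"
  using someI_ex[OF conductor_ex] unfolding N0_def by blast

lemma V_ge: assumes "N0 \<le> int k" shows "k \<in> V"
proof -
  obtain x where x: "x \<noteq> 0" "v x = int k" using v_surj by blast
  then have "x \<in> R" using assms by (intro N0) (simp add: vge_def)
  then show ?thesis using x V_iff by blast
qed

lemma V_infinite: "infinite V"
  unfolding infinite_nat_iff_unbounded_le
proof
  fix m
  show "\<exists>k\<ge>m. k \<in> V"
    by (rule exI[of _ "max m (nat N0)"]) (auto intro: V_ge)
qed

lemma a_in: "a j \<in> V"
  unfolding aseq_def by (rule enumerate_in_set[OF V_infinite])

lemma a_less_iff: "a j < a l \<longleftrightarrow> j < l"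
  unfolding aseq_def using V_infinite by simp

lemma a_le_iff: "a j \<le> a l \<longleftrightarrow> j \<le> l"
  unfolding aseq_def using V_infinite by simp

lemma a_ex: "k \<in> V \<Longrightarrow> \<exists>j. a j = k"
  unfolding aseq_def using enumerate_Ex[OF V_infinite] by blast

lemma a0: "a 0 = 0"
proof -
  have "(0::nat) \<in> V" using V_iff S(2) v_one by force
  then show ?thesis unfolding aseq_def enumerate_0 by (simp add: Least_eq_0)
qed

lemma elem: "\<exists>r\<in>R. r \<noteq> 0 \<and> v r = int (a j)"
  using a_in V_iff by blast

lemma val_a: "r \<in> R \<Longrightarrow> r \<noteq> 0 \<Longrightarrow> \<exists>j. v r = int (a j)"
proof -
  assume r: "r \<in> R" "r \<noteq> 0"
  then have "nat (v r) \<in> V" using V_iff R_nonneg by (metis int_nat_eq)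
  then obtain j where "a j = nat (v r)" using a_ex by blast
  then show ?thesis using R_nonneg[OF r] by (intro exI[of _ j]) simp
qed

lemma next_val:
  assumes "r \<in> R" "vge r (int (a j) + 1)"
  shows "vge r (int (a (Suc j)))"
proof (cases "r = 0")
  case False
  obtain l where l: "v r = int (a l)" using val_a[OF assms(1) False] by blast
  then have "a j < a l" using assms(2) False by (simp add: vge_def)
  then have "Suc j \<le> l" using a_less_iff by simp
  then have "a (Suc j) \<le> a l" using a_le_iff by simp
  then show ?thesis using l by (simp add: vge_def)
qed simp

lemma prop_ex: "\<exists>n0. \<forall>j. a (n0 + j) = a n0 + j"
proof -
  define K where "K = nat N0"
  have KV: "K + t \<in> V" for t unfolding K_def by (rule V_ge) simp
  obtain n0 where n0: "a n0 = K" using a_ex[OF KV[of 0]] by auto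
  have "a (n0 + j) = K + j" for j
  proof (induction j)
    case 0 then show ?case using n0 by simp
  next
    case (Suc j)
    have lt: "a (n0 + j) < a (n0 + Suc j)" using a_less_iff by simp
    obtain l where l: "a l = K + Suc j" using a_ex[OF KV] by blast
    then have "a (n0 + j) < a l" using Suc by simp
    then have "n0 + Suc j \<le> l" using a_less_iff by simp
    then have "a (n0 + Suc j) \<le> a l" using a_le_iff by simp
    then show ?case using lt l Suc by simp
  qed
  then show ?thesis using n0 by auto
qed

lemma n_prop: "a (n + j) = c + j"
  using LeastI_ex[OF prop_ex] unfolding n_index_def by blast

lemma c_vals: "int c \<le> int k \<Longrightarrow> k \<in> V"
  using n_prop[of "k - c"] a_in[of "n + (k - c)"] by simp

lemma gap:
  assumes "0 < n" "r \<in> R" "r \<noteq> 0"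
  shows "v r \<noteq> int c - 1"
proof
  assume vr: "v r = int c - 1"
  obtain l where l: "v r = int (a l)" using val_a[OF assms(2,3)] by blast
  then have al: "a l + 1 = c" using vr by simp
  then have "l < n" using a_less_iff by (metis less_add_one)
  then have "a l \<le> a (n - 1)" using a_le_iff by simp
  moreover have "a (n - 1) < c" using a_less_iff assms(1) by simp
  ultimately have an1: "a (n - 1) + 1 = c" using al by simp
  have "\<forall>j. a (n - 1 + j) = a (n - 1) + j"
  proof
    fix j show "a (n - 1 + j) = a (n - 1) + j"
    proof (cases j)
      case (Suc t)
      then have "n - 1 + j = n + t" using assms(1) by simp
      then show ?thesis using n_prop[of t] an1 Suc by simp
    qed simp
  qed
  then have "n \<le> n - 1" unfolding n_index_def by (rule Least_le)
  then show False using assms(1) by simp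
qed

lemma cond_step:
  assumes IH: "\<And>y. vge y (N0 - int k) \<Longrightarrow> vge y (int c) \<Longrightarrow> y \<in> R"
    and x1: "vge x (N0 - int (Suc k))" and x2: "vge x (int c)"
  shows "x \<in> R"
proof (cases "x = 0 \<or> N0 - int k \<le> v x")
  case True
  then have "vge x (N0 - int k)" unfolding vge_def by blast
  then show ?thesis using IH x2 by blast
next
  case False
  then have x0: "x \<noteq> 0" and lt: "v x < N0 - int k" by auto
  have ge: "N0 - int k - 1 \<le> v x" using x1 x0 unfolding vge_def by simp
  have vx: "v x + 1 = N0 - int k" using lt ge by linarith
  have cx: "int c \<le> v x" using x2 x0 unfolding vge_def by simp
  have "nat (v x) \<in> V" by (rule c_vals) (use cx in simp)
  then obtain r where r: "r \<in> R" "r \<noteq> 0" "v r = int (nat (v x))" using V_iff by blast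
  have vr: "v r = v x" using r(3) cx by simp
  have "vge x (v r)" using vr vge_v by simp
  then obtain \<alpha> where \<alpha>: "\<alpha> \<in> R" "vge (x - \<alpha> * r) (v r + 1)"
    using approx[OF r(2)] by blast
  have h1: "vge (x - \<alpha> * r) (N0 - int k)" using \<alpha>(2) vr vx by simp
  have h2: "vge (x - \<alpha> * r) (int c)"
    by (rule vge_mono[OF \<alpha>(2)]) (use vr cx in simp)
  have "x - \<alpha> * r \<in> R" using IH[OF h1 h2] .
  then have "(x - \<alpha> * r) + \<alpha> * r \<in> R" using S(3) S(5) \<alpha>(1) r(1) by blast
  then show ?thesis by simp
qed

lemma cond_main: "vge x (N0 - int k) \<Longrightarrow> vge x (int c) \<Longrightarrow> x \<in> R"
proof (induction k arbitrary: x)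
  case 0 then show ?case using N0 by simp
next
  case (Suc k)
  show ?case by (rule cond_step[OF Suc.IH Suc.prems])
qed

lemma cond: assumes "vge x (int c)" shows "x \<in> R"
proof -
  have "N0 - int (nat (N0 - int c)) \<le> int c" by simp
  then have "vge x (N0 - int (nat (N0 - int c)))" by (rule vge_mono[OF assms])
  then show ?thesis using cond_main assms by blast
qed

lemma I_iff: "y \<in> I j \<longleftrightarrow> y \<in> R \<and> vge y (int (a j))"
  unfolding Iv_def vge_def by auto

lemma I_sub: "I j \<subseteq> R" using I_iff by blast

lemma I_ideal: "is_ideal R (I j)"
  unfolding is_ideal_def
proof (intro conjI ballI)
  show "I j \<subseteq> R" by (rule I_sub)
  show "0 \<in> I j" using S by (simp add: I_iff)
  fix x y assume "x \<in> I j" "y \<in> I j"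
  then show "x + y \<in> I j" using S by (simp add: I_iff vge_add)
next
  fix r x assume "r \<in> R" "x \<in> I j"
  then show "r * x \<in> I j" using S R_vge[of r] vge_mult[of r 0 x] by (simp add: I_iff)
qed

lemma I_anti: assumes "j \<le> l" shows "I l \<subseteq> I j"
proof
  fix y assume "y \<in> I l"
  then have "y \<in> R" "vge y (int (a l))" by (simp_all add: I_iff)
  moreover have "int (a j) \<le> int (a l)" using assms a_le_iff by simp
  ultimately show "y \<in> I j" using vge_mono by (simp add: I_iff)
qed

lemma I_cond: assumes "vge x (int c)" "j \<le> n" shows "x \<in> I j"
proof -
  have "int (a j) \<le> int c" using assms(2) a_le_iff by simp
  then have "vge x (int (a j))" by (rule vge_mono[OF assms(1)])
  then show ?thesis using cond[OF assms(1)] by (simp add: I_iff)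
qed

lemma gap_arg:
  assumes "0 < n" "\<And>x. vge x (int c) \<Longrightarrow> x \<in> K" "\<forall>y\<in>K. z * y \<in> R"
  shows "vge z 0"
proof (rule ccontr)
  assume "\<not> vge z 0"
  then have z0: "z \<noteq> 0" and vz: "v z < 0" by (auto simp: vge_def)
  obtain y where y: "y \<noteq> 0" "v y = int c - 1 - v z" using v_surj by blast
  then have "vge y (int c)" using vz by (simp add: vge_def)
  then have "y \<in> K" using assms(2) by blast
  then have "z * y \<in> R" using assms(3) by blast
  moreover have "z * y \<noteq> 0" using z0 y by simp
  moreover have "v (z * y) = int c - 1" using v_mult[OF z0 y(1)] y(2) by simp
  ultimately show False using gap[OF assms(1)] by blast
qed

lemma I_trace: assumes "0 < n" "j \<le> n" shows "I j \<in> trace_ideals R"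
proof (rule trace_idealI[OF subR I_ideal])
  obtain r where "r \<in> R" "r \<noteq> 0" "v r = int (a j)" using elem by blast
  then have "r \<in> I j" by (simp add: I_iff vge_def)
  then show "I j \<noteq> {0}" using \<open>r \<noteq> 0\<close> by blast
next
  fix z assume z: "\<forall>y\<in>I j. z * y \<in> R"
  have "vge z 0" using gap_arg[OF assms(1) _ z] I_cond assms(2) by blast
  then show "\<forall>y\<in>I j. z * y \<in> I j" using z vge_mult[of z 0] by (auto simp: I_iff)
qed

end


context vsetting begin

definition good :: "nat \<Rightarrow> 'a \<Rightarrow> bool" where
  "good j u \<longleftrightarrow> \<not> (\<exists>z. z \<noteq> 0 \<and> v z = int (a (Suc j)) - int (a j) \<and> z * u \<in> R \<and> (\<forall>y\<in>I (j + 2). z * y \<in> R))"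

definition Kid :: "nat \<Rightarrow> 'a \<Rightarrow> 'a set" where
  "Kid j u = {r * u + y |r y. r \<in> R \<and> y \<in> I (j + 2)}"

lemma Kid_mem: "r \<in> R \<Longrightarrow> y \<in> I (j + 2) \<Longrightarrow> r * u + y \<in> Kid j u"
  unfolding Kid_def by blast

lemma Kid_memE: "s \<in> Kid j u \<Longrightarrow> \<exists>r y. r \<in> R \<and> y \<in> I (j + 2) \<and> s = r * u + y"
  unfolding Kid_def by blast

lemma I_0: "0 \<in> I j" using I_ideal[of j] unfolding is_ideal_def by blast

lemma I_in_Kid: "y \<in> I (j + 2) \<Longrightarrow> y \<in> Kid j u"
  using Kid_mem[of 0 y j u] S(1) by simp

lemma u_in_Kid: "u \<in> Kid j u"
  using Kid_mem[of 1 0 j u] S(2) I_0 by simp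

lemma Kid_ideal: assumes "u \<in> R" shows "is_ideal R (Kid j u)"
  unfolding is_ideal_def
proof (intro conjI ballI)
  show "Kid j u \<subseteq> R"
  proof
    fix s assume "s \<in> Kid j u"
    then obtain r y where "r \<in> R" "y \<in> I (j + 2)" "s = r * u + y" using Kid_memE by blast
    then show "s \<in> R" using assms S(3) S(5) I_sub by blast
  qed
  show "0 \<in> Kid j u" using Kid_mem[of 0 0 j u] S(1) I_0 by simp
next
  fix s t assume "s \<in> Kid j u" "t \<in> Kid j u"
  then obtain r y r' y' where h: "r \<in> R" "y \<in> I (j + 2)" "s = r * u + y"
    "r' \<in> R" "y' \<in> I (j + 2)" "t = r' * u + y'" using Kid_memE by metis
  have "s + t = (r + r') * u + (y + y')" using h by (simp add: algebra_simps)
  moreover have "r + r' \<in> R" using h S(3) by blast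
  moreover have "y + y' \<in> I (j + 2)" using h I_ideal unfolding is_ideal_def by blast
  ultimately show "s + t \<in> Kid j u" using Kid_mem by simp
next
  fix r' s assume "r' \<in> R" "s \<in> Kid j u"
  then obtain r y where h: "r \<in> R" "y \<in> I (j + 2)" "s = r * u + y" using Kid_memE by blast
  have "r' * s = (r' * r) * u + r' * y" using h by (simp add: algebra_simps)
  moreover have "r' * r \<in> R" using h \<open>r' \<in> R\<close> S(5) by blast
  moreover have "r' * y \<in> I (j + 2)" using h \<open>r' \<in> R\<close> I_ideal unfolding is_ideal_def by blast
  ultimately show "r' * s \<in> Kid j u" using Kid_mem by simp
qed

lemma good_no_d:
  assumes "good j u" "u \<in> R" "r \<in> R" "r \<noteq> 0"
  shows "v r \<noteq> int (a (Suc j)) - int (a j)"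
proof
  assume "v r = int (a (Suc j)) - int (a j)"
  moreover have "r * u \<in> R" using S(5)[OF assms(3,2)] .
  moreover have "\<forall>y\<in>I (j + 2). r * y \<in> R" using S(5)[OF assms(3)] I_sub by blast
  ultimately show False using assms(1,4) unfolding good_def by blast
qed

lemma a_step: "int (a j) < int (a (Suc j))" using a_less_iff by simp

lemma Kid_noval:
  assumes g: "good j u" and u: "u \<in> R" "u \<noteq> 0" "v u = int (a j)"
    and s: "s \<in> Kid j u" "s \<noteq> 0"
  shows "v s \<noteq> int (a (Suc j))"
proof
  assume vs: "v s = int (a (Suc j))"
  obtain r y where h: "r \<in> R" "y \<in> I (j + 2)" "s = r * u + y" using Kid_memE[OF s(1)] by blast
  have "vge y (int (a (j + 2)))" using h(2) by (simp add: I_iff)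
  moreover have "int (a (Suc j)) < int (a (j + 2))" using a_less_iff by simp
  ultimately have "- y = 0 \<or> v s < v (- y)" using vs by (auto simp: vge_def v_uminus)
  then have st: "s + - y \<noteq> 0 \<and> v (s + - y) = v s" by (rule v_strict[OF s(2)])
  have ru: "r * u = s + - y" using h(3) by simp
  then have r0: "r \<noteq> 0" using st by auto
  have "v (r * u) = v r + v u" using v_mult[OF r0 u(2)] .
  then have "v r = int (a (Suc j)) - int (a j)" using ru st vs u(3) by simp
  then show False using good_no_d[OF g u(1) h(1) r0] by simp
qed

lemma Kid_trace:
  assumes n0: "0 < n" and jn: "j + 2 \<le> n" and u: "u \<in> R" "u \<noteq> 0" "v u = int (a j)"
    and g: "good j u"
  shows "Kid j u \<in> trace_ideals R"
proof (rule trace_idealI[OF subR Kid_ideal[OF u(1)]])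
  show "Kid j u \<noteq> {0}" using u_in_Kid[of u j] u(2) by blast
next
  fix z assume zK: "\<forall>y\<in>Kid j u. z * y \<in> R"
  note KI = is_idealD[OF Kid_ideal[OF u(1), of j]]
  have "vge z 0"
  proof (rule gap_arg[OF n0 _ zK])
    fix x assume "vge x (int c)"
    then have "x \<in> I (j + 2)" using I_cond jn by blast
    then show "x \<in> Kid j u" by (rule I_in_Kid)
  qed
  then obtain \<alpha> where \<alpha>: "\<alpha> \<in> R" "vge (z - \<alpha>) 1" using residue by blast
  define e where "e = z - \<alpha>"
  have eI: "e * y \<in> I (j + 2)" if y: "y \<in> I (j + 2)" for y
  proof -
    have "z * y \<in> R" using zK I_in_Kid[OF y] by blast
    moreover have "\<alpha> * y \<in> R" using \<alpha>(1) y I_sub S(5) by blast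
    ultimately have "e * y \<in> R" unfolding e_def using S(4) by (simp add: left_diff_distrib)
    moreover have "vge (e * y) (1 + int (a (j + 2)))"
      using vge_mult[OF \<alpha>(2)[folded e_def]] y by (simp add: I_iff)
    ultimately show ?thesis using vge_mono by (simp add: I_iff)
  qed
  have euR: "e * u \<in> R"
  proof -
    have "z * u \<in> R" using zK u_in_Kid by blast
    moreover have "\<alpha> * u \<in> R" using \<alpha>(1) u(1) S(5) by blast
    ultimately show ?thesis unfolding e_def using S(4) by (simp add: left_diff_distrib)
  qed
  have eu: "e * u \<in> Kid j u"
  proof (cases "vge (e * u) (int (a (Suc j)) + 1)")
    case True
    then have "vge (e * u) (int (a (Suc (Suc j))))" by (rule next_val[OF euR])
    then have "e * u \<in> I (j + 2)" using euR by (simp add: I_iff)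
    then show ?thesis by (rule I_in_Kid)
  next
    case False
    have "vge (e * u) (1 + int (a j))" using vge_mult[OF \<alpha>(2)[folded e_def] vge_v[of u]] u(3) by simp
    then have "vge (e * u) (int (a (Suc j)))" using next_val[OF euR] by (simp add: add.commute)
    then have eu0: "e * u \<noteq> 0" and veu: "v (e * u) = int (a (Suc j))" using False by (auto simp: vge_def)
    then have e0: "e \<noteq> 0" by auto
    have "v e = int (a (Suc j)) - int (a j)" using v_mult[OF e0 u(2)] veu u(3) by simp
    moreover have "\<forall>y\<in>I (j + 2). e * y \<in> R" using eI I_sub by blast
    ultimately show ?thesis using g e0 euR unfolding good_def by blast
  qed
  have zu: "z * u \<in> Kid j u"
  proof -
    have "z * u = \<alpha> * u + e * u" unfolding e_def by (simp add: algebra_simps)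
    moreover have "\<alpha> * u \<in> Kid j u" using KI(4)[OF \<alpha>(1) u_in_Kid] .
    ultimately show ?thesis using KI(3) eu by simp
  qed
  show "\<forall>y\<in>Kid j u. z * y \<in> Kid j u"
  proof
    fix s assume "s \<in> Kid j u"
    then obtain r y where h: "r \<in> R" "y \<in> I (j + 2)" "s = r * u + y" using Kid_memE by blast
    have zy: "z * y \<in> Kid j u"
    proof -
      have "z * y = \<alpha> * y + e * y" unfolding e_def by (simp add: algebra_simps)
      moreover have "\<alpha> * y \<in> I (j + 2)" using I_ideal h(2) \<alpha>(1) unfolding is_ideal_def by blast
      ultimately have "z * y \<in> I (j + 2)" using eI[OF h(2)] I_ideal unfolding is_ideal_def by metis
      then show ?thesis by (rule I_in_Kid)
    qed
    have "z * s = r * (z * u) + z * y" using h(3) by (simp add: algebra_simps)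
    then show "z * s \<in> Kid j u" using KI(3)[OF KI(4)[OF h(1) zu] zy] by simp
  qed
qed

lemma Kid_notI:
  assumes jn: "j + 2 \<le> n" and u: "u \<in> R" "u \<noteq> 0" "v u = int (a j)" and g: "good j u"
  shows "Kid j u \<notin> I_family R v"
proof
  assume "Kid j u \<in> I_family R v"
  then obtain l where l: "l \<le> n" "Kid j u = I l" unfolding I_family_def by blast
  show False
  proof (cases "l \<le> Suc j")
    case True
    obtain w where w: "w \<in> R" "w \<noteq> 0" "v w = int (a (Suc j))" using elem by blast
    have "int (a l) \<le> int (a (Suc j))" using True a_le_iff by simp
    then have "w \<in> I l" using w by (simp add: I_iff vge_def)
    then have "w \<in> Kid j u" using l by simp
    then show False using Kid_noval[OF g u _ w(2)] w(3) by blast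
  next
    case False
    have "u \<in> I l" using u_in_Kid l by metis
    then have "int (a l) \<le> v u" using u(2) by (simp add: I_iff vge_def)
    then have "a l \<le> a j" using u(3) by simp
    then have "l \<le> j" using a_le_iff by simp
    then show False using False by simp
  qed
qed

end


context vsetting begin

lemma I_diff: "x \<in> I j \<Longrightarrow> y \<in> I j \<Longrightarrow> x - y \<in> I j"
proof -
  assume h: "x \<in> I j" "y \<in> I j"
  have "(-1) * y \<in> I j" using I_ideal[of j] h(2) S(6)[OF S(2)] unfolding is_ideal_def by blast
  then have "x + (-1) * y \<in> I j" using I_ideal[of j] h(1) unfolding is_ideal_def by blast
  then show ?thesis by simp
qed

lemma I_add: "x \<in> I j \<Longrightarrow> y \<in> I j \<Longrightarrow> x + y \<in> I j"
  using I_ideal[of j] unfolding is_ideal_def by blast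

lemma I_mult: "r \<in> R \<Longrightarrow> x \<in> I j \<Longrightarrow> r * x \<in> I j"
  using I_ideal[of j] unfolding is_ideal_def by blast

definition PT :: "nat \<Rightarrow> 'a \<Rightarrow> bool" where
  "PT j t \<longleftrightarrow> (\<forall>y\<in>I j. t * y \<in> I j)"

lemma PT_one: "PT j 1" by (simp add: PT_def)

lemma PT_add: "PT j s \<Longrightarrow> PT j t \<Longrightarrow> PT j (s + t)"
  unfolding PT_def by (simp add: distrib_right I_add)

lemma PT_diff: "PT j s \<Longrightarrow> PT j t \<Longrightarrow> PT j (s - t)"
  unfolding PT_def by (simp add: left_diff_distrib I_diff)

lemma PT_mult: "PT j s \<Longrightarrow> PT j t \<Longrightarrow> PT j (s * t)"
  unfolding PT_def by (simp add: mult.assoc)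

lemma PT_cond: assumes "vge t (int c)" shows "PT j t"
  unfolding PT_def
proof
  fix y assume y: "y \<in> I j"
  then have "vge y (int (a j))" by (simp add: I_iff)
  then have h: "vge (t * y) (int c + int (a j))" by (rule vge_mult[OF assms])
  then have "vge (t * y) (int c)" by (rule vge_mono) simp
  then have "t * y \<in> R" by (rule cond)
  moreover have "vge (t * y) (int (a j))" using h by (rule vge_mono) simp
  ultimately show "t * y \<in> I j" by (simp add: I_iff)
qed

lemma newton:
  assumes "vge (1 - g) 1" "PT j g"
  shows "\<exists>s. PT j s \<and> vge (1 - g * s) (int k + 1)"
proof (induction k)
  case 0
  show ?case using assms PT_one by (intro exI[of _ 1]) simp
next
  case (Suc k)
  then obtain s where s: "PT j s" "vge (1 - g * s) (int k + 1)" by blast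
  define e where "e = 1 - g * s"
  have Pe: "PT j e" unfolding e_def by (intro PT_diff PT_one PT_mult assms(2) s(1))
  have Ps': "PT j (s + s * e)" by (intro PT_add PT_mult s(1) Pe)
  have eq: "1 - g * (s + s * e) = e * e" unfolding e_def by (simp add: algebra_simps)
  have "vge (e * e) ((int k + 1) + (int k + 1))" using vge_mult s(2)[folded e_def] by blast
  then have "vge (e * e) (int (Suc k) + 1)" by (rule vge_mono) simp
  then show ?case using Ps' eq by (intro exI[of _ "s + s * e"]) simp
qed

lemma PT_inverse:
  assumes g1: "vge (1 - g) 1" and Pg: "PT j g"
  shows "PT j (inverse g)"
proof -
  have g0: "g \<noteq> 0"
  proof
    assume "g = 0"
    then have "vge 1 1" using g1 by simp
    then show False by (simp add: vge_def v_one)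
  qed
  have vg: "v g = 0"
  proof -
    have e1: "v (g - 1) = v (1 - g)" using v_uminus[of "1 - g"] by simp
    have "1 - g = 0 \<or> 1 \<le> v (1 - g)" using g1 by (simp add: vge_def)
    then have "g - 1 = 0 \<or> v 1 < v (g - 1)" using e1 v_one by auto
    from v_strict[OF one_neq_zero this] show ?thesis by (simp add: v_one)
  qed
  obtain s where s: "PT j s" "vge (1 - g * s) (int (nat (int c)) + 1)" using newton[OF g1 Pg] by blast
  define e where "e = 1 - g * s"
  have ec: "vge e (int c)" using s(2)[folded e_def] by (rule vge_mono) simp
  have "vge (e * inverse g) (int c + - v g)" by (rule vge_mult[OF ec vge_inverse])
  then have "PT j (e * inverse g)" using vg by (intro PT_cond) simp
  moreover have "inverse g = s + e * inverse g" unfolding e_def using g0 by (simp add: field_simps)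
  ultimately show ?thesis using PT_add[OF s(1)] by metis
qed

lemma good_shift:
  assumes jn: "j + 2 \<le> n" and g: "good j u" and u: "u \<in> R" "u \<noteq> 0" "v u = int (a j)"
    and lam: "lm \<in> R" and w: "w \<in> R" "vge w (int (a (Suc j)))"
  shows "u + lm * w \<in> R \<and> u + lm * w \<noteq> 0 \<and> v (u + lm * w) = int (a j) \<and> good j (u + lm * w)"
proof -
  have lwR: "lm * w \<in> R" using S(5)[OF lam w(1)] .
  have "vge (lm * w) (0 + int (a (Suc j)))" by (rule vge_mult[OF R_vge[OF lam] w(2)])
  then have "lm * w = 0 \<or> v u < v (lm * w)" using u(3) a_step[of j] by (auto simp: vge_def)
  then have st: "u + lm * w \<noteq> 0 \<and> v (u + lm * w) = v u" by (rule v_strict[OF u(2)])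
  have sR: "u + lm * w \<in> R" using S(3)[OF u(1) lwR] .
  have "good j (u + lm * w)"
    unfolding good_def
  proof
    assume "\<exists>z. z \<noteq> 0 \<and> v z = int (a (Suc j)) - int (a j) \<and> z * (u + lm * w) \<in> R \<and> (\<forall>y\<in>I (j + 2). z * y \<in> R)"
    then obtain z where z: "z \<noteq> 0" "v z = int (a (Suc j)) - int (a j)" "z * (u + lm * w) \<in> R"
      "\<forall>y\<in>I (j + 2). z * y \<in> R" by blast
    define r where "r = z * (u + lm * w)"
    have rR: "r \<in> R" using z(3) unfolding r_def .
    have r0: "r \<noteq> 0" unfolding r_def using z(1) st by simp
    have vr: "v r = int (a (Suc j))" unfolding r_def using v_mult[OF z(1)] st z(2) u(3) by simp
    have "vge (lm * w) (v r)" using w(2) vr vge_mult[OF R_vge[OF lam] w(2)] by simp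
    then obtain \<beta> where \<beta>: "\<beta> \<in> R" "vge (lm * w - \<beta> * r) (v r + 1)" using approx[OF r0] by blast
    define yy where "yy = lm * w - \<beta> * r"
    have yyR: "yy \<in> R" unfolding yy_def using S(4)[OF lwR S(5)[OF \<beta>(1) rR]] .
    have "vge yy (int (a (Suc (Suc j))))" using next_val[OF yyR] \<beta>(2) vr unfolding yy_def by simp
    then have yyI: "yy \<in> I (j + 2)" using yyR by (simp add: I_iff)
    have dpos: "1 \<le> v z" using z(2) a_step[of j] by simp
    have Pz: "PT (j + 2) z"
      unfolding PT_def
    proof
      fix y assume y: "y \<in> I (j + 2)"
      have "z * y \<in> R" using z(4) y by blast
      moreover have "vge (z * y) (1 + int (a (j + 2)))"
        using vge_mult[OF vge_mono[OF vge_v dpos], of y] y by (simp add: I_iff)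
      ultimately show "z * y \<in> I (j + 2)" using vge_mono by (simp add: I_iff)
    qed
    define gg where "gg = 1 - \<beta> * z"
    have "vge (\<beta> * z) (0 + 1)" by (rule vge_mult[OF R_vge[OF \<beta>(1)] vge_mono[OF vge_v dpos]])
    then have g1: "vge (1 - gg) 1" unfolding gg_def by simp
    have Pb: "PT (j + 2) \<beta>" unfolding PT_def using I_mult[OF \<beta>(1)] by blast
    have Pg: "PT (j + 2) gg" unfolding gg_def by (intro PT_diff PT_one PT_mult Pb Pz)
    have Pinv: "PT (j + 2) (inverse gg)" by (rule PT_inverse[OF g1 Pg])
    have gg0: "gg \<noteq> 0"
    proof
      assume "gg = 0"
      then have "vge 1 1" using g1 by simp
      then show False by (simp add: vge_def v_one)
    qed
    have vgg: "v gg = 0"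
    proof -
      have e1: "v (gg - 1) = v (1 - gg)" using v_uminus[of "1 - gg"] by simp
      have "1 - gg = 0 \<or> 1 \<le> v (1 - gg)" using g1 by (simp add: vge_def)
      then have "gg - 1 = 0 \<or> v 1 < v (gg - 1)" using e1 v_one by auto
      from v_strict[OF one_neq_zero this] show ?thesis by (simp add: v_one)
    qed
    define z' where "z' = z * inverse gg"
    have Pz': "PT (j + 2) z'" unfolding z'_def by (rule PT_mult[OF Pz Pinv])
    have z'0: "z' \<noteq> 0" unfolding z'_def using z(1) gg0 by simp
    have vz': "v z' = int (a (Suc j)) - int (a j)"
      unfolding z'_def using v_mult[OF z(1)] gg0 v_inverse[OF gg0] vgg z(2) by simp
    have key: "z * u = r * gg - z * yy" unfolding r_def gg_def yy_def by (simp add: algebra_simps)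
    have "z' * u = r - z' * yy" unfolding z'_def using key gg0
      by (simp add: field_simps)
    moreover have "z' * yy \<in> R" using Pz' yyI I_sub unfolding PT_def by blast
    ultimately have "z' * u \<in> R" using S(4)[OF rR] by simp
    moreover have "\<forall>y\<in>I (j + 2). z' * y \<in> R" using Pz' I_sub unfolding PT_def by blast
    ultimately show False using g z'0 vz' unfolding good_def by blast
  qed
  then show ?thesis using st sR u(3) by simp
qed

end


context vsetting begin

lemma Kid_distinct:
  assumes jn: "j + 2 \<le> n" and g: "good j u" and u: "u \<in> R" "u \<noteq> 0" "v u = int (a j)"
    and lm: "lm \<in> R" and mu: "mu \<in> R" and w: "w \<in> R" "w \<noteq> 0" "v w = int (a (Suc j))"
    and eq: "Kid j (u + lm * w) = Kid j (u + mu * w)"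
  shows "vge (lm - mu) 1"
proof -
  have wv: "vge w (int (a (Suc j)))" using w(3) by (simp add: vge_def)
  note sh = good_shift[OF jn g u mu w(1) wv]
  define u2 where "u2 = u + mu * w"
  have u2: "u2 \<in> R" "u2 \<noteq> 0" "v u2 = int (a j)" "good j u2" using sh unfolding u2_def by auto
  have m1: "u + lm * w \<in> Kid j u2" using eq u_in_Kid unfolding u2_def by metis
  have m2: "u2 \<in> Kid j u2" by (rule u_in_Kid)
  note KI = is_idealD[OF Kid_ideal[OF u2(1), of j]]
  have "(-1) * u2 \<in> Kid j u2" using KI(4)[OF S(6)[OF S(2)] m2] .
  then have "(u + lm * w) + (-1) * u2 \<in> Kid j u2" using KI(3)[OF m1] by blast
  moreover have "(u + lm * w) + (-1) * u2 = (lm - mu) * w" unfolding u2_def by (simp add: algebra_simps)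
  ultimately have dm: "(lm - mu) * w \<in> Kid j u2" by simp
  have dR: "lm - mu \<in> R" using S(4)[OF lm mu] .
  show ?thesis
  proof (cases "lm - mu = 0")
    case True then show ?thesis by simp
  next
    case False
    then have nz: "(lm - mu) * w \<noteq> 0" using w(2) by simp
    have "v ((lm - mu) * w) \<noteq> int (a (Suc j))" using Kid_noval[OF u2(4) u2(1-3) dm nz] .
    then have "v (lm - mu) \<noteq> 0" using v_mult[OF False w(2)] w(3) by simp
    moreover have "0 \<le> v (lm - mu)" using R_nonneg[OF dR False] .
    ultimately show ?thesis by (simp add: vge_def)
  qed
qed

lemma hyp_conv:
  assumes q: "q \<in> R" "q \<noteq> 0" "v q = int (a i)"
    and ne: "ideal_prod R (I i) (I (i + 2)) \<noteq> (\<lambda>x. q * x) ` I (i + 2)"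
  shows "\<exists>x\<in>I i. \<exists>y\<in>I (i + 2). x * y / q \<notin> R"
proof (rule ccontr)
  assume "\<not> ?thesis"
  then have all: "\<And>x y. x \<in> I i \<Longrightarrow> y \<in> I (i + 2) \<Longrightarrow> x * y / q \<in> R" by blast
  define P where "P = (\<lambda>x. q * x) ` I (i + 2)"
  define G where "G = {x * y |x y. x \<in> I i \<and> y \<in> I (i + 2)}"
  have Pid: "is_ideal R P"
    unfolding is_ideal_def
  proof (intro conjI ballI)
    show "P \<subseteq> R" unfolding P_def using S(5)[OF q(1)] I_sub by blast
    show "0 \<in> P" unfolding P_def using I_0 by force
  next
    fix s t assume "s \<in> P" "t \<in> P"
    then obtain s' t' where "s' \<in> I (i + 2)" "t' \<in> I (i + 2)" "s = q * s'" "t = q * t'"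
      unfolding P_def by blast
    moreover have "s' + t' \<in> I (i + 2)" using calculation I_add by blast
    ultimately have "s + t = q * (s' + t')" "s' + t' \<in> I (i + 2)" by (simp_all add: distrib_left)
    then show "s + t \<in> P" unfolding P_def by blast
  next
    fix r s assume "r \<in> R" "s \<in> P"
    then obtain s' where "s' \<in> I (i + 2)" "s = q * s'" unfolding P_def by blast
    moreover have "r * (q * s') = q * (r * s')" by (simp add: ac_simps)
    ultimately show "r * s \<in> P" unfolding P_def using I_mult[OF \<open>r \<in> R\<close>] by blast
  qed
  have GP: "G \<subseteq> P"
  proof
    fix t assume "t \<in> G"
    then obtain x y where xy: "x \<in> I i" "y \<in> I (i + 2)" "t = x * y" unfolding G_def by blast
    have R1: "x * y / q \<in> R" using all[OF xy(1,2)] .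
    have "vge (x * y * inverse q) (int (a i) + int (a (i + 2)) + - v q)"
      using vge_mult[OF vge_mult vge_inverse] xy(1,2) by (simp add: I_iff)
    then have "vge (x * y / q) (int (a (i + 2)))" using q(3) by (simp add: divide_inverse)
    then have "x * y / q \<in> I (i + 2)" using R1 by (simp add: I_iff)
    moreover have "t = q * (x * y / q)" using xy(3) q(2) by simp
    ultimately show "t \<in> P" unfolding P_def by blast
  qed
  have qI: "q \<in> I i" using q by (simp add: I_iff vge_def)
  have "ideal_prod R (I i) (I (i + 2)) = P"
  proof
    show "ideal_prod R (I i) (I (i + 2)) \<subseteq> P"
      unfolding ideal_prod_def ideal_gen_def using Pid GP unfolding G_def by blast
    show "P \<subseteq> ideal_prod R (I i) (I (i + 2))"
    proof
      fix t assume "t \<in> P"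
      then obtain y where y: "y \<in> I (i + 2)" "t = q * y" unfolding P_def by blast
      then have "t \<in> G" unfolding G_def using qI by blast
      then show "t \<in> ideal_prod R (I i) (I (i + 2))"
        unfolding ideal_prod_def ideal_gen_def G_def by blast
    qed
  qed
  then show False using ne unfolding P_def by simp
qed

end


context vsetting begin

lemma exist:
  assumes n0: "0 < n" and i1: "1 \<le> i" and i3: "i + 3 \<le> n"
    and q: "q \<in> R" "q \<noteq> 0" "v q = int (a i)"
    and x: "x \<in> I i" and y: "y \<in> I (i + 2)" and nR: "x * y / q \<notin> R"
  shows "\<exists>j u. i \<le> j \<and> j + 3 \<le> n \<and> u \<in> R \<and> u \<noteq> 0 \<and> v u = int (a j) \<and> good j u"
proof (rule ccontr)
  assume H: "\<not> ?thesis"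
  have H': "\<exists>z. z \<noteq> 0 \<and> v z = int (a (Suc l)) - int (a l) \<and> z * u \<in> R \<and> (\<forall>y\<in>I (l + 2). z * y \<in> R)"
    if hl: "i \<le> l" "l + 2 \<le> n" "u \<in> R" "u \<noteq> 0" "v u = int (a l)" for l u
  proof (cases "l + 3 \<le> n")
    case True
    then have "\<not> good l u" using H hl by blast
    then show ?thesis unfolding good_def by blast
  next
    case False
    then have ln: "l + 2 = n" using hl(2) by simp
    obtain w where w: "w \<in> R" "w \<noteq> 0" "v w = int (a (Suc l))" using elem by blast
    define z where "z = w / u"
    have z0: "z \<noteq> 0" unfolding z_def using w(2) hl(4) by simp
    have vz: "v z = int (a (Suc l)) - int (a l)"
      unfolding z_def using v_divide[OF w(2) hl(4)] w(3) hl(5) by simp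
    have zu: "z * u = w" unfolding z_def using hl(4) by simp
    have "\<forall>y\<in>I (l + 2). z * y \<in> R"
    proof
      fix y' assume y': "y' \<in> I (l + 2)"
      have "vge y' (int (a (l + 2)))" using y' by (simp add: I_iff)
      then have h: "vge (z * y') (v z + int (a (l + 2)))" by (rule vge_mult[OF vge_v])
      have "int c \<le> v z + int (a (l + 2))" using ln vz a_step[of l] by simp
      then have "vge (z * y') (int c)" by (rule vge_mono[OF h])
      then show "z * y' \<in> R" by (rule cond)
    qed
    then show ?thesis using z0 vz zu w(1) by auto
  qed
  have up: "\<exists>u\<in>R. u \<noteq> 0 \<and> v u = int (a (i + k)) \<and> (\<forall>y'\<in>I (i + 2). u / q * y' \<in> I (i + k + 2))"
    if "i + k + 1 \<le> n" for k
    using that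
  proof (induction k)
    case 0
    have "\<forall>y'\<in>I (i + 2). q / q * y' \<in> I (i + 0 + 2)" using q(2) by simp
    moreover have "v q = int (a (i + 0))" using q(3) by simp
    ultimately show ?case using q(1,2) by (intro bexI[of _ q] conjI) simp_all
  next
    case (Suc k)
    then have "i + k + 1 \<le> n" by simp
    then have "\<exists>u\<in>R. u \<noteq> 0 \<and> v u = int (a (i + k)) \<and> (\<forall>y'\<in>I (i + 2). u / q * y' \<in> I (i + k + 2))"
      by (rule Suc.IH)
    then obtain u where u: "u \<in> R" "u \<noteq> 0" "v u = int (a (i + k))"
      "\<forall>y'\<in>I (i + 2). u / q * y' \<in> I (i + k + 2)" by blast
    have ikn: "i + k + 2 \<le> n" using Suc.prems by simp
    have iik: "i \<le> i + k" by simp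
    obtain z where z: "z \<noteq> 0" "v z = int (a (Suc (i + k))) - int (a (i + k))" "z * u \<in> R"
      "\<forall>y\<in>I (i + k + 2). z * y \<in> R" using H'[OF iik ikn u(1) u(2) u(3)] by blast
    define u' where "u' = z * u"
    have u'R: "u' \<in> R" unfolding u'_def using z(3) .
    have u'0: "u' \<noteq> 0" unfolding u'_def using z(1) u(2) by simp
    have vu': "v u' = int (a (i + Suc k))" unfolding u'_def using v_mult[OF z(1) u(2)] z(2) u(3) by simp
    have dpos: "1 \<le> v z" using z(2) a_step[of "i + k"] by simp
    have "\<forall>y'\<in>I (i + 2). u' / q * y' \<in> I (i + Suc k + 2)"
    proof
      fix y' assume y': "y' \<in> I (i + 2)"
      define t where "t = u / q * y'"
      have tI: "t \<in> I (i + k + 2)" unfolding t_def using u(4) y' by blast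
      have eq: "u' / q * y' = z * t" unfolding t_def u'_def by simp
      have ztR: "z * t \<in> R" using z(4) tI by blast
      have "vge t (int (a (i + k + 2)))" using tI by (simp add: I_iff)
      then have "vge (z * t) (1 + int (a (i + k + 2)))" by (rule vge_mult[OF vge_mono[OF vge_v dpos]])
      then have "vge (z * t) (int (a (Suc (i + k + 2))))" using next_val[OF ztR] by (simp add: add.commute)
      then have "z * t \<in> I (i + Suc k + 2)" using ztR by (simp add: I_iff)
      then show "u' / q * y' \<in> I (i + Suc k + 2)" using eq by simp
    qed
    then show ?case using u'R u'0 vu' by blast
  qed
  have down: "\<forall>x'\<in>I (n - k). x' / q * y \<in> R" if "i \<le> n - k" for k
    using that
  proof (induction k)
    case 0
    show ?case
    proof
      fix x' assume x': "x' \<in> I (n - 0)"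
      have "vge x' (int c)" using x' by (simp add: I_iff)
      moreover have yv: "vge y (int (a (i + 2)))" using y by (simp add: I_iff)
      ultimately have "vge (x' * inverse q * y) (int c + - v q + int (a (i + 2)))"
        using vge_mult[OF vge_mult[OF \<open>vge x' (int c)\<close> vge_inverse[of q]] yv] by simp
      moreover have "int c \<le> int c + - v q + int (a (i + 2))" using q(3) a_le_iff[of i "i + 2"] by simp
      ultimately have "vge (x' * inverse q * y) (int c)" by (rule vge_mono)
      then show "x' / q * y \<in> R" using cond by (simp add: divide_inverse)
    qed
  next
    case (Suc k)
    define l where "l = n - Suc k"
    have il: "i \<le> l" using Suc.prems l_def by simp
    have ln: "Suc l = n - k" and l1: "l + 1 \<le> n" using il i1 l_def by auto
    have "i \<le> n - k" using Suc.prems by simp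
    then have IH0: "\<forall>x'\<in>I (n - k). x' / q * y \<in> R" by (rule Suc.IH)
    have IH: "\<forall>x'\<in>I (Suc l). x' / q * y \<in> R" using IH0 unfolding ln .
    have ll: "i + (l - i) = l" using il by simp
    have "i + (l - i) + 1 \<le> n" using ll l1 by simp
    then have "\<exists>u\<in>R. u \<noteq> 0 \<and> v u = int (a (i + (l - i))) \<and> (\<forall>y'\<in>I (i + 2). u / q * y' \<in> I (i + (l - i) + 2))"
      by (rule up)
    then obtain u where u: "u \<in> R" "u \<noteq> 0" "v u = int (a l)" "\<forall>y'\<in>I (i + 2). u / q * y' \<in> I (l + 2)"
      unfolding ll by blast
    show ?case
    proof
      fix x' assume x': "x' \<in> I (n - Suc k)"
      then have x'l: "x' \<in> I l" unfolding l_def .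
      then have x'R: "x' \<in> R" and "vge x' (int (a l))" by (simp_all add: I_iff)
      then have "vge x' (v u)" using u(3) by simp
      then obtain \<alpha> where \<alpha>: "\<alpha> \<in> R" "vge (x' - \<alpha> * u) (v u + 1)" using approx[OF u(2)] by blast
      define x'' where "x'' = x' - \<alpha> * u"
      have x''R: "x'' \<in> R" unfolding x''_def using S(4)[OF x'R S(5)[OF \<alpha>(1) u(1)]] .
      have "vge x'' (int (a (Suc l)))" using next_val[OF x''R] \<alpha>(2) u(3) unfolding x''_def by simp
      then have "x'' \<in> I (Suc l)" using x''R by (simp add: I_iff)
      then have r1: "x'' / q * y \<in> R" using IH by blast
      have r2: "u / q * y \<in> R" using u(4) y I_sub by blast
      have "x' / q * y = \<alpha> * (u / q * y) + x'' / q * y" unfolding x''_def by (simp add: algebra_simps diff_divide_distrib)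
      then show "x' / q * y \<in> R" using S(3)[OF S(5)[OF \<alpha>(1) r2] r1] by simp
    qed
  qed
  have "\<forall>x'\<in>I (n - (n - i)). x' / q * y \<in> R" using down[of "n - i"] i3 by simp
  then have "x / q * y \<in> R" using x i3 by simp
  then show False using nR by simp
qed

end


lemma coset_eq:
  assumes sub: "subring_of R" and mid: "is_ideal R m" and lm: "lm \<in> R" and mu: "mu \<in> R"
    and d: "lm - mu \<in> m"
  shows "(\<lambda>x. lm + x) ` m = (\<lambda>x. mu + x) ` m"
proof
  note Sr = subring_ofD[OF sub]
  note Mi = is_idealD[OF mid]
  show "(\<lambda>x. lm + x) ` m \<subseteq> (\<lambda>x. mu + x) ` m"
  proof
    fix t assume "t \<in> (\<lambda>x. lm + x) ` m"
    then obtain x where x: "x \<in> m" "t = lm + x" by blast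
    have "(lm - mu) + x \<in> m" using Mi(3)[OF d x(1)] .
    moreover have "t = mu + ((lm - mu) + x)" using x(2) by simp
    ultimately show "t \<in> (\<lambda>x. mu + x) ` m" by blast
  qed
  show "(\<lambda>x. mu + x) ` m \<subseteq> (\<lambda>x. lm + x) ` m"
  proof
    fix t assume "t \<in> (\<lambda>x. mu + x) ` m"
    then obtain x where x: "x \<in> m" "t = mu + x" by blast
    have "(-1) * (lm - mu) \<in> m" using Mi(4)[OF Sr(6)[OF Sr(2)] d] .
    then have "x + (-1) * (lm - mu) \<in> m" using Mi(3)[OF x(1)] by blast
    moreover have "t = lm + (x + (-1) * (lm - mu))" using x(2) by simp
    ultimately show "t \<in> (\<lambda>x. lm + x) ` m" by blast
  qed
qed

theorem corollary3p7:
  fixes R m :: "'a::field set" and nn :: "'a set" and v :: "'a \<Rightarrow> int"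
  assumes subR: "subring_of R"
    and QR: "is_fraction_field_of R"
    and noeth: "noetherian R"
    and loc: "local_ring R m"
    and dim1: "krull_dim_eq R 1"
    and anirr: "analytically_irreducible R m"
    and fg: "fin_gen_module R (integral_closure R)"
    and locbar: "local_ring (integral_closure R) nn"
    and iso: "residue_map_iso R m (integral_closure R) nn"
    and val: "normalized_valuation (integral_closure R) v"
    and n4: "n_index R v \<ge> 4"
    and hyp: "\<exists>i. 1 \<le> i \<and> i \<le> n_index R v - 3 \<and>
               (\<exists>q\<in>R. q \<noteq> 0 \<and> v q = int (aseq R v i) \<and>
                  ideal_prod R (Iv R v i) (Iv R v (i + 2)) \<noteq> (\<lambda>x. q * x) ` Iv R v (i + 2))"
  shows "I_family R v \<subset> trace_ideals R \<and>
         (infinite (residue_field R m) \<longrightarrow> infinite (trace_ideals R))"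
proof -
  interpret vsetting R m nn v
    using subR QR fg locbar iso val by (rule vsetting.intro)
  have n0: "0 < n" using n4 by simp
  obtain i q where i: "1 \<le> i" "i \<le> n - 3" and q: "q \<in> R" "q \<noteq> 0" "v q = int (a i)"
    and ne: "ideal_prod R (I i) (I (i + 2)) \<noteq> (\<lambda>x. q * x) ` I (i + 2)"
    using hyp by blast
  have i3: "i + 3 \<le> n" using i n4 by simp
  obtain x y where xy: "x \<in> I i" "y \<in> I (i + 2)" "x * y / q \<notin> R"
    using hyp_conv[OF q ne] by blast
  obtain j u where ju: "i \<le> j" "j + 3 \<le> n" "u \<in> R" "u \<noteq> 0" "v u = int (a j)" "good j u"
    using exist[OF n0 i(1) i3 q xy] by blast
  have jn: "j + 2 \<le> n" using ju(2) by simp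
  have sub: "I_family R v \<subseteq> trace_ideals R"
  proof
    fix K assume "K \<in> I_family R v"
    then obtain l where "l \<le> n" "K = I l" unfolding I_family_def by blast
    then show "K \<in> trace_ideals R" using I_trace[OF n0] by blast
  qed
  have Kt: "Kid j u \<in> trace_ideals R" by (rule Kid_trace[OF n0 jn ju(3) ju(4) ju(5) ju(6)])
  have Kn: "Kid j u \<notin> I_family R v" by (rule Kid_notI[OF jn ju(3) ju(4) ju(5) ju(6)])
  have part1: "I_family R v \<subset> trace_ideals R" using sub Kt Kn by blast
  have part2: "infinite (residue_field R m) \<longrightarrow> infinite (trace_ideals R)"
  proof
    assume inf: "infinite (residue_field R m)"
    show "infinite (trace_ideals R)"
    proof
      assume fin: "finite (trace_ideals R)"
      obtain w where w: "w \<in> R" "w \<noteq> 0" "v w = int (a (Suc j))" using elem by blast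
      have wv: "vge w (int (a (Suc j)))" using w(3) by (simp add: vge_def)
      define f where "f = (\<lambda>lm. Kid j (u + lm * w))"
      have "f ` R \<subseteq> trace_ideals R"
      proof
        fix K assume "K \<in> f ` R"
        then obtain lm where lm: "lm \<in> R" "K = f lm" by blast
        have sh: "u + lm * w \<in> R \<and> u + lm * w \<noteq> 0 \<and> v (u + lm * w) = int (a j) \<and> good j (u + lm * w)"
          by (rule good_shift[OF jn ju(6) ju(3) ju(4) ju(5) lm(1) w(1) wv])
        have "Kid j (u + lm * w) \<in> trace_ideals R"
          using Kid_trace[OF n0 jn] sh by blast
        then show "K \<in> trace_ideals R" unfolding lm(2) f_def .
      qed
      then have finf: "finite (f ` R)" using fin finite_subset by blast
      have mid: "is_ideal R m" using loc unfolding local_ring_def maximal_ideal_def by blast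
      have "finite ((\<lambda>r. (\<lambda>x. r + x) ` m) ` R)"
      proof (rule finite_image_factor[OF finf])
        fix lm mu assume h: "lm \<in> R" "mu \<in> R" "f lm = f mu"
        have "vge (lm - mu) 1"
          using Kid_distinct[OF jn ju(6) ju(3) ju(4) ju(5) h(1) h(2) w(1) w(2) w(3)] h(3)
          unfolding f_def by blast
        then have dm: "lm - mu \<in> m" using m_iff S(4)[OF h(1) h(2)] by blast
        show "(\<lambda>x. lm + x) ` m = (\<lambda>x. mu + x) ` m" by (rule coset_eq[OF subR mid h(1) h(2) dm])
      qed
      then show False using inf unfolding residue_field_def by simp
    qed
  qed
  show ?thesis using part1 part2 by blast
qed

end
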